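(* Let $G=(V,E,w)$ be an undirected graph with positive real edge weights, $s\in V$, let $T$ be a shortest-path tree of $G$ rooted at $s$ and $w'$ as in the context. Let $F\subseteq E$, let $t\in V$ be reachable from $s$ in $G-F$, let $\pi$ be a shortest path from $s$ to $t$ in $G-F$, and let $N$ be the set of new edges of $\pi$. Then for every $e\in N$, $w'(e)\le 2\,d_{G-F}(t)$.
   Context: For a subgraph $X$ of $G$, $d_X(u)$ denotes the distance from $s$ to $u$ in $X$ with respect to $w$. Define $w'(u,v)=0$ if $(u,v)\in E(T)$ and $w'(u,v)=d_T(u)+w(u,v)+d_T(v)$ otherwise. $G-F$ and $T-F$ denote $G$ and $T$ with the edges of $F$ removed. An edge is called new if its endpoints lie in different connected components of the forest $T-F$. *)

theory Defs
  imports Complex_Main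
begin

text \<open>Subgraphs are given by edge subsets X of E
  (on the full vertex set V).\<close>

definition ugraph :: "'v set \<Rightarrow> 'v set set \<Rightarrow> bool" where
  "ugraph V E \<longleftrightarrow> finite V \<and> (\<forall>e\<in>E. e \<subseteq> V \<and> card e = 2)"

definition walk :: "'v set \<Rightarrow> 'v set set \<Rightarrow> 'v list \<Rightarrow> bool" where
  "walk V X p \<longleftrightarrow> p \<noteq> [] \<and> set p \<subseteq> V \<and>
     (\<forall>i. Suc i < length p \<longrightarrow> {p ! i, p ! Suc i} \<in> X)"

definition path :: "'v set \<Rightarrow> 'v set set \<Rightarrow> 'v list \<Rightarrow> bool" where
  "path V X p \<longleftrightarrow> walk V X p \<and> distinct p"

definition walk_edges :: "'v list \<Rightarrow> 'v set set" where
  "walk_edges p = {{p ! i, p ! Suc i} | i. Suc i < length p}"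

definition walk_weight :: "('v set \<Rightarrow> real) \<Rightarrow> 'v list \<Rightarrow> real" where
  "walk_weight w p = (\<Sum>i<length p - 1. w {p ! i, p ! Suc i})"

definition reachable :: "'v set \<Rightarrow> 'v set set \<Rightarrow> 'v \<Rightarrow> 'v \<Rightarrow> bool" where
  "reachable V X u v \<longleftrightarrow> (\<exists>p. walk V X p \<and> hd p = u \<and> last p = v)"

definition dist :: "'v set \<Rightarrow> 'v set set \<Rightarrow> ('v set \<Rightarrow> real) \<Rightarrow> 'v \<Rightarrow> 'v \<Rightarrow> real" where
  "dist V X w s u = Inf {walk_weight w p | p. walk V X p \<and> hd p = s \<and> last p = u}"

definition shortest_path :: "'v set \<Rightarrow> 'v set set \<Rightarrow> ('v set \<Rightarrow> real) \<Rightarrow> 'v \<Rightarrow> 'v \<Rightarrow> 'v list \<Rightarrow> bool" where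
  "shortest_path V X w s t p \<longleftrightarrow> path V X p \<and> hd p = s \<and> last p = t \<and>
     walk_weight w p = dist V X w s t"

text \<open>T \<subseteq> E is a tree spanning the vertices reachable from s: connected on them, and
  minimally so (removing any edge disconnects its endpoints, i.e. acyclic).\<close>
definition shortest_path_tree :: "'v set \<Rightarrow> 'v set set \<Rightarrow> ('v set \<Rightarrow> real) \<Rightarrow> 'v \<Rightarrow> 'v set set \<Rightarrow> bool" where
  "shortest_path_tree V E w s T \<longleftrightarrow> s \<in> V \<and> T \<subseteq> E \<and>
     (\<forall>u\<in>V. reachable V E s u \<longleftrightarrow> reachable V T s u) \<and>
     (\<forall>e\<in>T. \<forall>u\<in>e. reachable V T s u) \<and>
     (\<forall>e\<in>T. \<forall>u v. e = {u, v} \<longrightarrow> \<not> reachable V (T - {e}) u v) \<and>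
     (\<forall>u\<in>V. reachable V E s u \<longrightarrow> dist V T w s u = dist V E w s u)"

definition w' :: "'v set \<Rightarrow> 'v set set \<Rightarrow> ('v set \<Rightarrow> real) \<Rightarrow> 'v \<Rightarrow> 'v \<Rightarrow> 'v \<Rightarrow> real" where
  "w' V T w s u v = (if {u, v} \<in> T then 0 else dist V T w s u + w {u, v} + dist V T w s v)"

definition new_edge :: "'v set \<Rightarrow> 'v set set \<Rightarrow> 'v set set \<Rightarrow> 'v \<Rightarrow> 'v \<Rightarrow> bool" where
  "new_edge V T F u v \<longleftrightarrow> \<not> reachable V (T - F) u v"

end

theory Submission
  imports Defs
begin

lemma walk_mono: "walk V X p \<Longrightarrow> X \<subseteq> Y \<Longrightarrow> walk V Y p"
  unfolding walk_def by blast

lemma walk_weight_nonneg: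
  assumes "walk V X p" "\<forall>e\<in>X. w e \<ge> 0"
  shows "walk_weight w p \<ge> 0"
  unfolding walk_weight_def
proof (rule sum_nonneg)
  fix i assume "i \<in> {..<length p - 1}"
  hence "Suc i < length p" by auto
  thus "0 \<le> w {p ! i, p ! Suc i}" using assms unfolding walk_def by blast
qed

lemma dist_le_walk:
  assumes "walk V X p" "hd p = s" "last p = u" "\<forall>e\<in>X. w e \<ge> 0"
  shows "dist V X w s u \<le> walk_weight w p"
  unfolding dist_def
proof (rule cInf_lower)
  show "walk_weight w p \<in> {walk_weight w p |p. walk V X p \<and> hd p = s \<and> last p = u}"
    using assms by blast
  show "bdd_below {walk_weight w p |p. walk V X p \<and> hd p = s \<and> last p = u}"
    unfolding bdd_below_def using walk_weight_nonneg assms(4) by blast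
qed

lemma take_walk:
  assumes "walk V X p" "k < length p"
  shows "walk V X (take (Suc k) p)" "hd (take (Suc k) p) = hd p"
    "last (take (Suc k) p) = p ! k"
    "walk_weight w (take (Suc k) p) = (\<Sum>j<k. w {p ! j, p ! Suc j})"
proof -
  show "walk V X (take (Suc k) p)" using assms unfolding walk_def
    by (auto dest: in_set_takeD)
  show "hd (take (Suc k) p) = hd p" using assms by (simp add: hd_take)
  show "last (take (Suc k) p) = p ! k" using assms(2) by (subst last_conv_nth) (auto simp: min_def intro: arg_cong[where f="(!) p"])
  show "walk_weight w (take (Suc k) p) = (\<Sum>j<k. w {p ! j, p ! Suc j})"
    unfolding walk_weight_def using assms(2) by (intro sum.cong) auto
qed

theorem lemma4:
  fixes V :: "'v set" and E F T :: "'v set set" and w :: "'v set \<Rightarrow> real"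
    and s t :: 'v and \<pi> :: "'v list"
  assumes "ugraph V E"
    and "\<forall>e\<in>E. w e > 0"
    and "shortest_path_tree V E w s T"
    and "F \<subseteq> E"
    and "t \<in> V"
    and "reachable V (E - F) s t"
    and "shortest_path V (E - F) w s t \<pi>"
  shows "\<forall>u v. {u, v} \<in> walk_edges \<pi> \<and> new_edge V T F u v \<longrightarrow>
           w' V T w s u v \<le> 2 * dist V (E - F) w s t"
proof (intro allI impI)
  fix u v assume "{u, v} \<in> walk_edges \<pi> \<and> new_edge V T F u v"
  then obtain i where i: "Suc i < length \<pi>" "{u, v} = {\<pi> ! i, \<pi> ! Suc i}"
    unfolding walk_edges_def by auto
  have wE: "\<forall>e\<in>E. w e \<ge> 0" using assms(2) by auto
  hence wEF: "\<forall>e\<in>E - F. w e \<ge> 0" by auto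
  have pw: "walk V (E - F) \<pi>" "hd \<pi> = s" "last \<pi> = t"
    and pd: "walk_weight w \<pi> = dist V (E - F) w s t"
    using assms(7) unfolding shortest_path_def path_def by auto
  have pwE: "walk V E \<pi>" using walk_mono[OF pw(1)] by auto
  define P where "P k = (\<Sum>j<k. w {\<pi> ! j, \<pi> ! Suc j})" for k
  have edge: "w {\<pi> ! j, \<pi> ! Suc j} \<ge> 0" if "Suc j < length \<pi>" for j
    using pwE that wE unfolding walk_def by blast
  have dT: "dist V T w s (\<pi> ! k) \<le> P k" if "k < length \<pi>" for k
  proof -
    have tw: "walk V E (take (Suc k) \<pi>)" "hd (take (Suc k) \<pi>) = s"
      "last (take (Suc k) \<pi>) = \<pi> ! k"
      "walk_weight w (take (Suc k) \<pi>) = P k"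
      using take_walk(1-3)[OF pwE that] take_walk(4)[OF pwE that, where w=w] pw(2) P_def by auto
    have "\<pi> ! k \<in> V" using pwE that unfolding walk_def by auto
    moreover have "reachable V E s (\<pi> ! k)" unfolding reachable_def using tw by blast
    ultimately have "dist V T w s (\<pi> ! k) = dist V E w s (\<pi> ! k)"
      using assms(3) unfolding shortest_path_tree_def by blast
    also have "\<dots> \<le> P k" using dist_le_walk[OF tw(1-3) wE] tw(4) by simp
    finally show ?thesis .
  qed
  have Psuc: "P (Suc i) = P i + w {\<pi> ! i, \<pi> ! Suc i}" unfolding P_def by simp
  have Pmono: "P (Suc i) \<le> P (length \<pi> - 1)" unfolding P_def
    using i(1) edge by (intro sum_mono2) auto
  have Pfull: "P (length \<pi> - 1) = dist V (E - F) w s t"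
    using pd unfolding P_def walk_weight_def by simp
  have P0: "P i \<ge> 0" unfolding P_def using i(1) edge by (intro sum_nonneg) auto
  have "w' V T w s u v = w' V T w s (\<pi> ! i) (\<pi> ! Suc i)"
    using i(2) unfolding w'_def by (auto simp: doubleton_eq_iff insert_commute)
  also have "\<dots> \<le> 2 * dist V (E - F) w s t"
    using dT[of i] dT[of "Suc i"] i(1) Psuc Pmono Pfull P0 edge[of i]
    unfolding w'_def by auto
  finally show "w' V T w s u v \<le> 2 * dist V (E - F) w s t" .
qed

end
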